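(* Let $G$ be a compact group and $\alpha$ an automorphism of $G$ such that $(G,\alpha)$ is topologically transitive and has finite depth. Let $V$ be an open normal subgroup of $G$ with $\bigcap_{k\in\mathbb{Z}}\alpha^k(V)=\{1\}$ and $V=V_+V_-$. Then (1) there is $k\in\mathbb{N}$ such that $\alpha^k(V_+)V_-=G$; and (2) $\bigcup_{n\in\mathbb{N}}\big(\alpha^n(V_+)\cap\alpha^{-n}(V_-)\big)$ is dense in $G$.
   Context: $V_+=\bigcap_{k\ge0}\alpha^k(V)$, $V_-=\bigcap_{k\ge0}\alpha^{-k}(V)$. $(G,\alpha)$ is topologically transitive if some orbit $\{\alpha^n(x):n\in\mathbb{Z}\}$ is dense in $G$; it has finite depth if there is an open subgroup $U\le G$ with $\bigcap_{k\in\mathbb{Z}}\alpha^k(U)=\{1\}$. *)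

theory Defs
  imports "HOL-Analysis.Analysis"
begin

text \<open>Groups are written additively via the class group_add, which does NOT assume
commutativity; so 'a :: group_add is an arbitrary (possibly non-abelian) group with
identity 0, product +, inverse uminus.\<close>

definition topological_group :: "'a::{group_add,topological_space} itself \<Rightarrow> bool" where
  "topological_group _ \<longleftrightarrow>
     continuous_on UNIV (\<lambda>p::'a \<times> 'a. fst p + snd p) \<and> continuous_on UNIV (uminus :: 'a \<Rightarrow> 'a)"

definition is_subgroup :: "'a::group_add set \<Rightarrow> bool" where
  "is_subgroup H \<longleftrightarrow> 0 \<in> H \<and> (\<forall>x\<in>H. \<forall>y\<in>H. x + y \<in> H) \<and> (\<forall>x\<in>H. - x \<in> H)"

definition is_normal_subgroup :: "'a::group_add set \<Rightarrow> bool" where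
  "is_normal_subgroup H \<longleftrightarrow> is_subgroup H \<and> (\<forall>g x. x \<in> H \<longrightarrow> g + x - g \<in> H)"

definition top_automorphism :: "('a::{group_add,topological_space} \<Rightarrow> 'a) \<Rightarrow> bool" where
  "top_automorphism \<alpha> \<longleftrightarrow> bij \<alpha> \<and> (\<forall>x y. \<alpha> (x + y) = \<alpha> x + \<alpha> y)
     \<and> continuous_on UNIV \<alpha> \<and> continuous_on UNIV (inv \<alpha>)"

definition apow :: "('a \<Rightarrow> 'a) \<Rightarrow> int \<Rightarrow> 'a \<Rightarrow> 'a" where
  "apow \<alpha> k = (if 0 \<le> k then \<alpha> ^^ nat k else inv \<alpha> ^^ nat (- k))"

definition top_transitive :: "('a::{group_add,topological_space} \<Rightarrow> 'a) \<Rightarrow> bool" where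
  "top_transitive \<alpha> \<longleftrightarrow> (\<exists>x. closure {apow \<alpha> n x | n. True} = UNIV)"

definition finite_depth :: "('a::{group_add,topological_space} \<Rightarrow> 'a) \<Rightarrow> bool" where
  "finite_depth \<alpha> \<longleftrightarrow> (\<exists>U. open U \<and> is_subgroup U \<and> (\<Inter>k. apow \<alpha> k ` U) = {0})"

definition Vplus :: "('a \<Rightarrow> 'a) \<Rightarrow> 'a set \<Rightarrow> 'a set" where
  "Vplus \<alpha> V = (\<Inter>k::nat. (\<alpha> ^^ k) ` V)"

definition Vminus :: "('a \<Rightarrow> 'a) \<Rightarrow> 'a set \<Rightarrow> 'a set" where
  "Vminus \<alpha> V = (\<Inter>k::nat. (inv \<alpha> ^^ k) ` V)"

definition setprod :: "'a::group_add set \<Rightarrow> 'a set \<Rightarrow> 'a set" where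
  "setprod A B = {a + b | a b. a \<in> A \<and> b \<in> B}"

end

theory Submission
  imports Defs
begin


lemma apow_int[simp]: "apow \<alpha> (int n) = \<alpha> ^^ n" by (simp add: apow_def)
lemma apow_neg_int[simp]: "apow \<alpha> (- int n) = inv \<alpha> ^^ n" 
proof (cases n)
  case 0 then show ?thesis by (simp add: apow_def)
next
  case (Suc m)
  have "\<not> 0 \<le> - int n" using Suc by simp
  then have "apow \<alpha> (- int n) = inv \<alpha> ^^ nat (- (- int n))" unfolding apow_def by (simp only: if_False)
  then show ?thesis by (simp only: minus_minus nat_int)
qed
lemma apow_0[simp]: "apow \<alpha> 0 x = x" by (simp add: apow_def)

lemma apow_succ: assumes "bij \<alpha>" shows "apow \<alpha> (k+1) x = \<alpha> (apow \<alpha> k x)"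
proof (cases k)
  case (nonneg n)
  then have "k+1 = int (Suc n)" by simp
  then have "apow \<alpha> (k+1) x = (\<alpha>^^Suc n) x" by (simp only: apow_int)
  then show ?thesis using nonneg by (simp only: apow_int funpow.simps o_apply)
next
  case (neg n)
  then have "k+1 = - int n" by simp
  then have "apow \<alpha> (k+1) x = (inv \<alpha>^^n) x" by (simp only: apow_neg_int)
  moreover have "apow \<alpha> k x = inv \<alpha> ((inv \<alpha>^^n) x)" using neg by (simp only: apow_neg_int funpow.simps o_apply)
  ultimately show ?thesis using assms by (simp add: surj_f_inv_f bij_is_surj)
qed

lemma apow_pred: assumes "bij \<alpha>" shows "apow \<alpha> (k - 1) x = inv \<alpha> (apow \<alpha> k x)"
proof -
  have "apow \<alpha> k x = \<alpha> (apow \<alpha> (k - 1) x)" using apow_succ[OF assms, of "k-1"] by simp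
  then show ?thesis using assms by (simp add: bij_is_inj)
qed

lemma apow_add: assumes "bij \<alpha>" shows "apow \<alpha> (a + b) x = apow \<alpha> a (apow \<alpha> b x)"
proof (induct a rule: int_induct[where k=0])
  case base then show ?case by simp
next
  case (step1 i)
  have "apow \<alpha> (i + 1 + b) x = apow \<alpha> ((i + b) + 1) x" by (simp add: algebra_simps)
  also have "\<dots> = \<alpha> (apow \<alpha> (i+b) x)" by (rule apow_succ[OF assms])
  finally show ?case using step1 apow_succ[OF assms] by simp
next
  case (step2 i)
  have "apow \<alpha> (i - 1 + b) x = apow \<alpha> ((i + b) - 1) x" by (simp add: algebra_simps)
  also have "\<dots> = inv \<alpha> (apow \<alpha> (i+b) x)" by (rule apow_pred[OF assms])
  finally show ?case using step2 apow_pred[OF assms] by simp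
qed

lemma apow_cancel1: assumes "bij \<alpha>" shows "apow \<alpha> (-k) (apow \<alpha> k x) = x"
  using apow_add[OF assms, of "-k" k x] by simp
lemma apow_cancel2: assumes "bij \<alpha>" shows "apow \<alpha> k (apow \<alpha> (-k) x) = x"
  using apow_add[OF assms, of k "-k" x] by simp

lemma apow_mem_image: assumes "bij \<alpha>" shows "x \<in> apow \<alpha> k ` S \<longleftrightarrow> apow \<alpha> (-k) x \<in> S"
proof
  assume "x \<in> apow \<alpha> k ` S" then show "apow \<alpha> (-k) x \<in> S" using apow_cancel1[OF assms] by auto
next
  assume "apow \<alpha> (-k) x \<in> S" then show "x \<in> apow \<alpha> k ` S"
    using apow_cancel2[OF assms, of k x] by (metis image_eqI)
qed

lemma apow_surj: assumes "bij \<alpha>" shows "apow \<alpha> k ` UNIV = UNIV"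
  using apow_mem_image[OF assms] by auto

lemma inv_hom: fixes \<alpha> :: "'a::group_add \<Rightarrow> 'a"
  assumes "bij \<alpha>" "\<forall>x y. \<alpha> (x + y) = \<alpha> x + \<alpha> y"
  shows "inv \<alpha> (x + y) = inv \<alpha> x + inv \<alpha> y"
proof -
  have "\<alpha> (inv \<alpha> x + inv \<alpha> y) = x + y" using assms by (simp add: surj_f_inv_f bij_is_surj)
  also have "\<dots> = \<alpha> (inv \<alpha> (x+y))" using assms by (simp add: surj_f_inv_f bij_is_surj)
  finally show ?thesis using assms by (metis bij_is_inj injD)
qed

lemma apow_hom: fixes \<alpha> :: "'a::group_add \<Rightarrow> 'a"
  assumes "bij \<alpha>" "\<forall>x y. \<alpha> (x + y) = \<alpha> x + \<alpha> y"
  shows "apow \<alpha> k (x + y) = apow \<alpha> k x + apow \<alpha> k y"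
proof (induct k rule: int_induct[where k=0])
  case base then show ?case by simp
next
  case (step1 i) then show ?case using assms by (simp only: apow_succ[OF assms(1)])
next
  case (step2 i) then show ?case using assms inv_hom[OF assms] by (simp only: apow_pred[OF assms(1)])
qed

lemma hom_0: fixes f :: "'a::group_add \<Rightarrow> 'a"
  assumes "\<And>x y. f (x + y) = f x + f y" shows "f 0 = 0"
proof -
  have "f 0 + f 0 = f 0" using assms[of 0 0] by simp
  then have "f 0 + f 0 = 0 + f 0" by simp
  then show ?thesis by (simp only: add_right_cancel)
qed

lemma hom_minus: fixes f :: "'a::group_add \<Rightarrow> 'a"
  assumes "\<And>x y. f (x + y) = f x + f y" shows "f (- x) = - f x"
proof -
  have "f (- x + x) = f (- x) + f x" by (rule assms)
  then have "f (- x) + f x = 0" using hom_0[of f] assms by simp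
  then show ?thesis by (simp add: eq_neg_iff_add_eq_0)
qed

lemma apow_cont: fixes \<alpha> :: "'a::topological_space \<Rightarrow> 'a"
  assumes "bij \<alpha>" "continuous_on UNIV \<alpha>" "continuous_on UNIV (inv \<alpha>)"
  shows "continuous_on UNIV (apow \<alpha> k)"
proof (induct k rule: int_induct[where k=0])
  case base
  have "apow \<alpha> 0 = id" by (rule ext) simp
  then show ?case by (simp add: continuous_on_id)
next
  case (step1 i)
  have "apow \<alpha> (i+1) = (\<lambda>x. \<alpha> (apow \<alpha> i x))" by (rule ext) (rule apow_succ[OF assms(1)])
  then show ?case using step1 assms continuous_on_compose2[of UNIV \<alpha>] by auto
next
  case (step2 i)
  have "apow \<alpha> (i-1) = (\<lambda>x. inv \<alpha> (apow \<alpha> i x))" by (rule ext) (rule apow_pred[OF assms(1)])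
  then show ?case using step2 assms continuous_on_compose2[of UNIV "inv \<alpha>"] by auto
qed

lemma translate_cont:
  fixes c :: "'a::{group_add,topological_space}"
  assumes "topological_group TYPE('a)"
  shows "continuous_on UNIV (\<lambda>y. c + y)"
proof -
  have 1: "continuous_on UNIV (\<lambda>p::'a \<times> 'a. fst p + snd p)" using assms by (simp add: topological_group_def)
  have 2: "continuous_on UNIV (\<lambda>y::'a. (c, y))" by (intro continuous_intros)
  show ?thesis using continuous_on_compose2[OF 1 2] by simp
qed

lemma translate_open:
  fixes c :: "'a::{group_add,topological_space}"
  assumes "topological_group TYPE('a)" "open S"
  shows "open {y. c + y \<in> S}"
proof -
  have "{y. c + y \<in> S} = (\<lambda>y. c + y) -` S" by auto
  then show ?thesis using continuous_imp_open_vimage[OF translate_cont[OF assms(1)] open_UNIV assms(2)] by simp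
qed

lemma subgroup_super_open:
  fixes H :: "'a::{group_add,topological_space} set"
  assumes "topological_group TYPE('a)" "open H" "is_subgroup H" "is_subgroup S" "H \<subseteq> S"
  shows "open S"
proof -
  have "S = (\<Union>s\<in>S. {y. - s + y \<in> H})"
  proof
    show "S \<subseteq> (\<Union>s\<in>S. {y. - s + y \<in> H})"
    proof
      fix x assume "x \<in> S"
      moreover have "- x + x \<in> H" using assms(3) by (simp add: is_subgroup_def)
      ultimately show "x \<in> (\<Union>s\<in>S. {y. - s + y \<in> H})" by blast
    qed
  next
    show "(\<Union>s\<in>S. {y. - s + y \<in> H}) \<subseteq> S"
    proof
      fix y assume "y \<in> (\<Union>s\<in>S. {y. - s + y \<in> H})"
      then obtain s where s: "s \<in> S" "- s + y \<in> H" by blast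
      then have "- s + y \<in> S" using assms(5) by blast
      moreover have "\<forall>x\<in>S. \<forall>y\<in>S. x + y \<in> S" using assms(4) by (simp add: is_subgroup_def)
      ultimately have "s + (- s + y) \<in> S" using s(1) by blast
      then show "y \<in> S" by simp
    qed
  qed
  moreover have "open (\<Union>s\<in>S. {y. - s + y \<in> H})" using translate_open[OF assms(1,2)] by blast
  ultimately show ?thesis by simp
qed

lemma subgroup_open_closed:
  fixes H :: "'a::{group_add,topological_space} set"
  assumes "topological_group TYPE('a)" "open H" "is_subgroup H"
  shows "closed H"
proof -
  have "- H = (\<Union>s\<in>-H. {y. - s + y \<in> H})"
  proof
    show "- H \<subseteq> (\<Union>s\<in>-H. {y. - s + y \<in> H})"
    proof
      fix x assume "x \<in> - H"
      moreover have "- x + x \<in> H" using assms(3) by (simp add: is_subgroup_def)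
      ultimately show "x \<in> (\<Union>s\<in>-H. {y. - s + y \<in> H})" by blast
    qed
  next
    show "(\<Union>s\<in>-H. {y. - s + y \<in> H}) \<subseteq> - H"
    proof
      fix y assume "y \<in> (\<Union>s\<in>-H. {y. - s + y \<in> H})"
      then obtain s where s: "s \<notin> H" "- s + y \<in> H" by blast
      have "\<forall>x\<in>H. \<forall>y\<in>H. x + y \<in> H" "\<forall>x\<in>H. - x \<in> H" using assms(3) by (simp_all add: is_subgroup_def)
      then have "y \<in> H \<Longrightarrow> y + - (- s + y) \<in> H" using s(2) by blast
      then have "y \<in> H \<Longrightarrow> s \<in> H" by (simp add: minus_add)
      then show "y \<in> - H" using s(1) by blast
    qed
  qed
  moreover have "open (\<Union>s\<in>-H. {y. - s + y \<in> H})" using translate_open[OF assms(1,2)] by blast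
  ultimately have "open (- H)" by simp
  then show ?thesis by (simp add: closed_def)
qed

lemma normal_preimage:
  fixes f :: "'a::group_add \<Rightarrow> 'a"
  assumes "\<And>x y. f (x + y) = f x + f y" "is_normal_subgroup H"
  shows "is_normal_subgroup {x. f x \<in> H}"
proof -
  have m: "f (- x) = - f x" for x using hom_minus[of f] assms(1) by blast
  have d: "f (x - y) = f x - f y" for x y using assms(1)[of x "-y"] m[of y] by (simp add: diff_conv_add_uminus del: add_uminus_conv_diff)
  show ?thesis using assms(2) hom_0[of f] assms(1) unfolding is_normal_subgroup_def is_subgroup_def
    by (simp add: m d assms(1))
qed

lemma normal_Inter:
  fixes H :: "'i \<Rightarrow> 'a::group_add set"
  assumes "\<And>i. i \<in> I \<Longrightarrow> is_normal_subgroup (H i)"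
  shows "is_normal_subgroup {x. \<forall>i\<in>I. x \<in> H i}"
  using assms unfolding is_normal_subgroup_def is_subgroup_def by blast

lemma setprod_iff: "x \<in> setprod A B \<longleftrightarrow> (\<exists>a b. x = a + b \<and> a \<in> A \<and> b \<in> B)"
  unfolding setprod_def by (rule mem_Collect_eq)
lemma setprodE: assumes "x \<in> setprod A B" obtains a b where "x = a + b" "a \<in> A" "b \<in> B"
  using assms unfolding setprod_iff by auto
lemma setprodI: "a \<in> A \<Longrightarrow> b \<in> B \<Longrightarrow> a + b \<in> setprod A B"
  unfolding setprod_iff by auto

lemma normal_setprod:
  fixes H K :: "'a::group_add set"
  assumes "is_normal_subgroup H" "is_normal_subgroup K"
  shows "is_normal_subgroup (setprod H K)"
proof -
  have H: "0 \<in> H" "\<And>x y. x \<in> H \<Longrightarrow> y \<in> H \<Longrightarrow> x + y \<in> H" "\<And>x. x \<in> H \<Longrightarrow> - x \<in> H"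
    "\<And>g x. x \<in> H \<Longrightarrow> g + x - g \<in> H"
    using assms(1) unfolding is_normal_subgroup_def is_subgroup_def by blast+
  have K: "0 \<in> K" "\<And>x y. x \<in> K \<Longrightarrow> y \<in> K \<Longrightarrow> x + y \<in> K" "\<And>x. x \<in> K \<Longrightarrow> - x \<in> K"
    "\<And>g x. x \<in> K \<Longrightarrow> g + x - g \<in> K"
    using assms(2) unfolding is_normal_subgroup_def is_subgroup_def by blast+
  have z: "0 \<in> setprod H K" using setprodI[OF H(1) K(1)] by simp
  have a: "x + y \<in> setprod H K" if xy: "x \<in> setprod H K" "y \<in> setprod H K" for x y
  proof -
    obtain a b where ab: "x = a + b" "a \<in> H" "b \<in> K" using xy(1) by (rule setprodE)
    obtain c d where cd: "y = c + d" "c \<in> H" "d \<in> K" using xy(2) by (rule setprodE)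
    have "x + y = (a + c) + ((- c + b - - c) + d)"
      by (simp add: ab cd add.assoc diff_conv_add_uminus del: add_uminus_conv_diff)
    moreover have "a + c \<in> H" by (rule H(2)[OF ab(2) cd(2)])
    moreover have "(- c + b - - c) + d \<in> K" by (rule K(2)[OF K(4)[OF ab(3)] cd(3)])
    ultimately show ?thesis by (metis setprodI)
  qed
  have n: "- x \<in> setprod H K" if xx: "x \<in> setprod H K" for x
  proof -
    obtain a b where ab: "x = a + b" "a \<in> H" "b \<in> K" using xx by (rule setprodE)
    have "- x = (- b + - a - - b) + - b"
      by (simp add: ab add.assoc diff_conv_add_uminus minus_add del: add_uminus_conv_diff)
    moreover have "- b + - a - - b \<in> H" by (rule H(4)[OF H(3)[OF ab(2)]])
    moreover have "- b \<in> K" by (rule K(3)[OF ab(3)])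
    ultimately show ?thesis by (metis setprodI)
  qed
  have c: "g + x - g \<in> setprod H K" if xx: "x \<in> setprod H K" for g x
  proof -
    obtain a b where ab: "x = a + b" "a \<in> H" "b \<in> K" using xx by (rule setprodE)
    have "g + x - g = (g + a - g) + (g + b - g)"
      by (simp add: ab add.assoc diff_conv_add_uminus del: add_uminus_conv_diff)
    then show ?thesis using setprodI[OF H(4)[OF ab(2)] K(4)[OF ab(3)]] by simp
  qed
  show ?thesis unfolding is_normal_subgroup_def is_subgroup_def using z a n c by blast
qed

lemma setprod_mono: "A \<subseteq> A' \<Longrightarrow> B \<subseteq> B' \<Longrightarrow> setprod A B \<subseteq> setprod A' B'"
proof
  fix x assume A: "A \<subseteq> A'" and B: "B \<subseteq> B'" and x: "x \<in> setprod A B"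
  obtain a b where ab: "x = a + b" "a \<in> A" "b \<in> B" using x by (rule setprodE)
  have "a \<in> A'" "b \<in> B'" using ab A B by auto
  then show "x \<in> setprod A' B'" using ab(1) by (simp add: setprodI)
qed

lemma image_setprod:
  fixes f :: "'a::group_add \<Rightarrow> 'a"
  assumes "\<And>x y. f (x + y) = f x + f y"
  shows "f ` setprod A B = setprod (f ` A) (f ` B)"
proof
  show "f ` setprod A B \<subseteq> setprod (f ` A) (f ` B)"
  proof
    fix z assume "z \<in> f ` setprod A B"
    then obtain x where x: "x \<in> setprod A B" "z = f x" by blast
    obtain a b where "x = a + b" "a \<in> A" "b \<in> B" using x(1) by (rule setprodE)
    then have "f a + f b \<in> setprod (f ` A) (f ` B)" by (intro setprodI) auto
    then show "z \<in> setprod (f ` A) (f ` B)" using x \<open>x = a + b\<close> assms by simp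
  qed
  show "setprod (f ` A) (f ` B) \<subseteq> f ` setprod A B"
  proof
    fix z assume "z \<in> setprod (f ` A) (f ` B)"
    then obtain a' b' where ab: "z = a' + b'" "a' \<in> f ` A" "b' \<in> f ` B" by (rule setprodE)
    then obtain a b where "a' = f a" "b' = f b" "a \<in> A" "b \<in> B" by blast
    then have "z = f (a + b)" "a + b \<in> setprod A B" using assms ab(1) setprodI by auto
    then show "z \<in> f ` setprod A B" by blast
  qed
qed


definition Pp :: "('a \<Rightarrow> 'a) \<Rightarrow> 'a set \<Rightarrow> int \<Rightarrow> 'a set" where
  "Pp \<alpha> V j = {x. \<forall>i\<in>{j..}. x \<in> {y. apow \<alpha> (-i) y \<in> V}}"
definition Mm :: "('a \<Rightarrow> 'a) \<Rightarrow> 'a set \<Rightarrow> int \<Rightarrow> 'a set" where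
  "Mm \<alpha> V j = {x. \<forall>i\<in>{..j}. x \<in> {y. apow \<alpha> (-i) y \<in> V}}"
definition Nn :: "('a \<Rightarrow> 'a) \<Rightarrow> 'a set \<Rightarrow> nat \<Rightarrow> 'a set" where
  "Nn \<alpha> V m = {x. \<forall>i\<in>{- int m..int m}. x \<in> {y. apow \<alpha> (-i) y \<in> V}}"

locale setting =
  fixes \<alpha> :: "'a::{group_add,t2_space} \<Rightarrow> 'a" and V :: "'a set"
  assumes tg: "topological_group TYPE('a)" and cpt: "compact (UNIV :: 'a set)"
    and aut: "top_automorphism \<alpha>" and tt: "top_transitive \<alpha>"
    and Vo: "open V" and Vn: "is_normal_subgroup V"
    and Vi: "(\<Inter>k. apow \<alpha> k ` V) = {0}"
    and Vp: "V = setprod (Pp \<alpha> V 0) (Mm \<alpha> V 0)"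
begin

lemma bij: "bij \<alpha>" using aut by (simp add: top_automorphism_def)
lemma hom: "\<And>x y. \<alpha> (x + y) = \<alpha> x + \<alpha> y" using aut by (simp add: top_automorphism_def)
lemma homa: "\<forall>x y. \<alpha> (x + y) = \<alpha> x + \<alpha> y" using aut by (simp add: top_automorphism_def)
lemma ca: "continuous_on UNIV \<alpha>" using aut by (simp add: top_automorphism_def)
lemma ci: "continuous_on UNIV (inv \<alpha>)" using aut by (simp add: top_automorphism_def)

lemma ahom: "apow \<alpha> k (x + y) = apow \<alpha> k x + apow \<alpha> k y"
  by (rule apow_hom[OF bij homa])

lemma A_normal: "is_normal_subgroup {y. apow \<alpha> (-i) y \<in> V}"
  by (rule normal_preimage[OF ahom Vn])

lemma A_open: "open {y. apow \<alpha> (-i) y \<in> V}"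
proof -
  have "{y. apow \<alpha> (-i) y \<in> V} = apow \<alpha> (-i) -` V" by auto
  then show ?thesis using continuous_imp_open_vimage[OF apow_cont[OF bij ca ci] open_UNIV Vo] by simp
qed

lemma A_closed: "closed {y. apow \<alpha> (-i) y \<in> V}"
  using subgroup_open_closed[OF tg A_open] A_normal by (simp add: is_normal_subgroup_def)

lemma P_normal: "is_normal_subgroup (Pp \<alpha> V j)"
  unfolding Pp_def by (rule normal_Inter) (rule A_normal)
lemma M_normal: "is_normal_subgroup (Mm \<alpha> V j)"
  unfolding Mm_def by (rule normal_Inter) (rule A_normal)
lemma N_normal: "is_normal_subgroup (Nn \<alpha> V m)"
  unfolding Nn_def by (rule normal_Inter) (rule A_normal)

lemma P_mono: "j \<le> j' \<Longrightarrow> Pp \<alpha> V j \<subseteq> Pp \<alpha> V j'"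
  unfolding Pp_def by auto
lemma M_mono: "j' \<le> j \<Longrightarrow> Mm \<alpha> V j \<subseteq> Mm \<alpha> V j'"
  unfolding Mm_def by auto

lemma apow_shift_V: "apow \<alpha> (-i) (apow \<alpha> (-t) x) = apow \<alpha> (-(i+t)) x"
  using apow_add[OF bij, of "-i" "-t" x] by simp

lemma P_shift: "apow \<alpha> t ` Pp \<alpha> V j = Pp \<alpha> V (j + t)"
proof (rule set_eqI)
  fix x
  have "x \<in> apow \<alpha> t ` Pp \<alpha> V j \<longleftrightarrow> apow \<alpha> (-t) x \<in> Pp \<alpha> V j" by (rule apow_mem_image[OF bij])
  also have "\<dots> \<longleftrightarrow> (\<forall>i\<ge>j. apow \<alpha> (-(i+t)) x \<in> V)" by (auto simp: Pp_def apow_shift_V)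
  also have "\<dots> \<longleftrightarrow> (\<forall>i\<ge>j+t. apow \<alpha> (-i) x \<in> V)"
  proof
    assume H: "\<forall>i\<ge>j. apow \<alpha> (-(i+t)) x \<in> V"
    show "\<forall>i\<ge>j+t. apow \<alpha> (-i) x \<in> V"
    proof (intro allI impI)
      fix i assume "j + t \<le> i"
      then have "j \<le> i - t" by simp
      then have "apow \<alpha> (-((i-t)+t)) x \<in> V" using H by blast
      then show "apow \<alpha> (-i) x \<in> V" by simp
    qed
  next
    assume H: "\<forall>i\<ge>j+t. apow \<alpha> (-i) x \<in> V"
    show "\<forall>i\<ge>j. apow \<alpha> (-(i+t)) x \<in> V"
    proof (intro allI impI)
      fix i assume "j \<le> i"
      then have "j + t \<le> i + t" by simp
      then show "apow \<alpha> (-(i+t)) x \<in> V" using H by blast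
    qed
  qed
  also have "\<dots> \<longleftrightarrow> x \<in> Pp \<alpha> V (j + t)" by (auto simp: Pp_def)
  finally show "x \<in> apow \<alpha> t ` Pp \<alpha> V j \<longleftrightarrow> x \<in> Pp \<alpha> V (j + t)" .
qed

lemma M_shift: "apow \<alpha> t ` Mm \<alpha> V j = Mm \<alpha> V (j + t)"
proof (rule set_eqI)
  fix x
  have "x \<in> apow \<alpha> t ` Mm \<alpha> V j \<longleftrightarrow> apow \<alpha> (-t) x \<in> Mm \<alpha> V j" by (rule apow_mem_image[OF bij])
  also have "\<dots> \<longleftrightarrow> (\<forall>i\<le>j. apow \<alpha> (-(i+t)) x \<in> V)" by (auto simp: Mm_def apow_shift_V)
  also have "\<dots> \<longleftrightarrow> (\<forall>i\<le>j+t. apow \<alpha> (-i) x \<in> V)"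
  proof
    assume H: "\<forall>i\<le>j. apow \<alpha> (-(i+t)) x \<in> V"
    show "\<forall>i\<le>j+t. apow \<alpha> (-i) x \<in> V"
    proof (intro allI impI)
      fix i assume "i \<le> j + t"
      then have "i - t \<le> j" by simp
      then have "apow \<alpha> (-((i-t)+t)) x \<in> V" using H by blast
      then show "apow \<alpha> (-i) x \<in> V" by simp
    qed
  next
    assume H: "\<forall>i\<le>j+t. apow \<alpha> (-i) x \<in> V"
    show "\<forall>i\<le>j. apow \<alpha> (-(i+t)) x \<in> V"
    proof (intro allI impI)
      fix i assume "i \<le> j"
      then have "i + t \<le> j + t" by simp
      then show "apow \<alpha> (-(i+t)) x \<in> V" using H by blast
    qed
  qed
  also have "\<dots> \<longleftrightarrow> x \<in> Mm \<alpha> V (j + t)" by (auto simp: Mm_def)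
  finally show "x \<in> apow \<alpha> t ` Mm \<alpha> V j \<longleftrightarrow> x \<in> Mm \<alpha> V (j + t)" .
qed

lemma shift_prod: "apow \<alpha> t ` setprod (Pp \<alpha> V j) (Mm \<alpha> V j') = setprod (Pp \<alpha> V (j+t)) (Mm \<alpha> V (j'+t))"
  using image_setprod[of "apow \<alpha> t", OF ahom] P_shift M_shift by simp

end


context setting begin

definition S :: "nat \<Rightarrow> nat \<Rightarrow> 'a set" where
  "S j n = setprod (Pp \<alpha> V (int j)) (Mm \<alpha> V (- int n))"

lemma S_normal: "is_normal_subgroup (S j n)"
  unfolding S_def by (rule normal_setprod[OF P_normal M_normal])

lemma S_mono: "j \<le> j' \<Longrightarrow> n \<le> n' \<Longrightarrow> S j n \<subseteq> S j' n'"
  unfolding S_def by (intro setprod_mono P_mono M_mono) auto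

lemma V_S: "V \<subseteq> S j n"
proof -
  have "V = S 0 0" using Vp by (simp add: S_def)
  then show ?thesis using S_mono[of 0 j 0 n] by simp
qed

lemma V_sub: "is_subgroup V" using Vn by (simp add: is_normal_subgroup_def)

lemma S_open: "open (S j n)"
  by (rule subgroup_super_open[OF tg Vo V_sub _ V_S]) (use S_normal in \<open>simp add: is_normal_subgroup_def\<close>)

definition Z :: "'a set" where "Z = (\<Union>p. S (fst p) (snd p))"

lemma Z_sub: "is_subgroup Z"
proof -
  have sg: "is_subgroup (S j n)" for j n using S_normal by (simp add: is_normal_subgroup_def)
  have z: "0 \<in> Z" using sg[of 0 0] unfolding Z_def is_subgroup_def by auto
  have sa: "\<forall>x\<in>S j n. \<forall>y\<in>S j n. x + y \<in> S j n" for j n using sg[of j n] by (simp add: is_subgroup_def)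
  have sn: "\<forall>x\<in>S j n. - x \<in> S j n" for j n using sg[of j n] by (simp add: is_subgroup_def)
  have a: "x + y \<in> Z" if xy: "x \<in> Z" "y \<in> Z" for x y
  proof -
    obtain j n where x: "x \<in> S j n" using xy(1) unfolding Z_def by auto
    obtain j' n' where y: "y \<in> S j' n'" using xy(2) unfolding Z_def by auto
    have "x \<in> S (max j j') (max n n')" using x S_mono[of j "max j j'" n "max n n'"] by auto
    moreover have "y \<in> S (max j j') (max n n')" using y S_mono[of j' "max j j'" n' "max n n'"] by auto
    ultimately have "x + y \<in> S (max j j') (max n n')" using sa by blast
    then show ?thesis unfolding Z_def by auto
  qed
  have n: "- x \<in> Z" if xx: "x \<in> Z" for x
  proof -
    obtain j n where x: "x \<in> S j n" using xx unfolding Z_def by auto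
    then have "- x \<in> S j n" using sn by blast
    then show ?thesis unfolding Z_def by auto
  qed
  show ?thesis unfolding is_subgroup_def using z a n by auto
qed

lemma V_Z: "V \<subseteq> Z"
proof
  fix x assume "x \<in> V"
  then have "x \<in> S (fst (0::nat,0::nat)) (snd (0::nat,0::nat))" using V_S[of 0 0] by auto
  then show "x \<in> Z" unfolding Z_def by blast
qed

lemma Z_open: "open Z" by (rule subgroup_super_open[OF tg Vo V_sub Z_sub V_Z])
lemma Z_closed: "closed Z" by (rule subgroup_open_closed[OF tg Z_open Z_sub])

lemma Z_inv: assumes "x \<in> Z" shows "apow \<alpha> t x \<in> Z"
proof -
  obtain j n where x: "x \<in> S j n" using assms unfolding Z_def by auto
  have "apow \<alpha> t x \<in> apow \<alpha> t ` S j n" using x by blast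
  also have "\<dots> = setprod (Pp \<alpha> V (int j + t)) (Mm \<alpha> V (- int n + t))"
    unfolding S_def by (rule shift_prod)
  also have "\<dots> \<subseteq> S (nat (int j + t)) (nat (int n - t))"
    unfolding S_def by (intro setprod_mono P_mono M_mono) auto
  finally show ?thesis unfolding Z_def by auto
qed

lemma Z_UNIV: "Z = UNIV"
proof -
  obtain x0 where x0: "closure {apow \<alpha> n x0 | n. True} = UNIV" using tt by (auto simp: top_transitive_def)
  let ?O = "{apow \<alpha> n x0 | n. True}"
  have "0 \<in> Z" using Z_sub by (simp add: is_subgroup_def)
  then have "Z \<inter> closure ?O \<noteq> {}" using x0 by auto
  then have "Z \<inter> ?O \<noteq> {}" using open_Int_closure_eq_empty[OF Z_open] by blast
  then obtain n where n: "apow \<alpha> n x0 \<in> Z" by blast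
  have "?O \<subseteq> Z"
  proof
    fix y assume "y \<in> ?O"
    then obtain m where m: "y = apow \<alpha> m x0" by blast
    have "apow \<alpha> (m - n) (apow \<alpha> n x0) \<in> Z" by (rule Z_inv[OF n])
    then show "y \<in> Z" using apow_add[OF bij, of "m - n" n x0] m by simp
  qed
  then have "closure ?O \<subseteq> Z" using closure_minimal Z_closed by blast
  then show ?thesis using x0 by blast
qed

lemma part1: "\<exists>k::nat. setprod (Pp \<alpha> V (int k)) (Mm \<alpha> V 0) = UNIV"
proof -
  have U0: "UNIV \<subseteq> (\<Union>p\<in>UNIV. S (fst p) (snd p))" using Z_UNIV unfolding Z_def by simp
  have op: "\<And>T. T \<in> UNIV \<Longrightarrow> open (S (fst T) (snd T))" using S_open by blast
  obtain C where C: "C \<subseteq> UNIV" "finite C" "UNIV \<subseteq> (\<Union>p\<in>C. S (fst p) (snd p))"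
    by (rule compactE_image[OF cpt op U0])
  define J where "J = (\<Sum>p\<in>C. fst p)"
  define N where "N = (\<Sum>p\<in>C. snd p)"
  have "S (fst p) (snd p) \<subseteq> S J N" if pC: "p \<in> C" for p
  proof (rule S_mono)
    show "fst p \<le> J" unfolding J_def by (rule member_le_sum[OF pC _ C(2)]) simp
    show "snd p \<le> N" unfolding N_def by (rule member_le_sum[OF pC _ C(2)]) simp
  qed
  then have U: "S J N = UNIV" using C(3) by blast
  have "UNIV = apow \<alpha> (int N) ` UNIV" using apow_surj[OF bij, of "int N"] by (simp only:)
  also have "\<dots> = apow \<alpha> (int N) ` S J N" using U by simp
  also have "\<dots> = setprod (Pp \<alpha> V (int J + int N)) (Mm \<alpha> V (- int N + int N))"
    unfolding S_def by (rule shift_prod)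
  also have "\<dots> = setprod (Pp \<alpha> V (int (J + N))) (Mm \<alpha> V 0)" by simp
  finally have E: "UNIV = setprod (Pp \<alpha> V (int (J + N))) (Mm \<alpha> V 0)" .
  show ?thesis using E by (intro exI[of _ "J+N"]) simp
qed


lemma decomp: "\<exists>k :: nat. \<forall>t. setprod (Pp \<alpha> V (int k + t)) (Mm \<alpha> V t) = UNIV"
proof -
  obtain k :: nat where k: "setprod (Pp \<alpha> V (int k)) (Mm \<alpha> V 0) = UNIV" using part1 by blast
  have kk: "setprod (Pp \<alpha> V (int k + t)) (Mm \<alpha> V t) = UNIV" for t
  proof -
    have "setprod (Pp \<alpha> V (int k + t)) (Mm \<alpha> V (0 + t)) = apow \<alpha> t ` setprod (Pp \<alpha> V (int k)) (Mm \<alpha> V 0)"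
      by (rule shift_prod[symmetric])
    also have "\<dots> = UNIV" using k apow_surj[OF bij, of t] by (simp only:)
    finally show ?thesis by simp
  qed
  show ?thesis using kk by blast
qed

lemma A_eq: "{y. apow \<alpha> (-i) y \<in> V} = apow \<alpha> i ` V"
  by (rule set_eqI) (simp only: mem_Collect_eq apow_mem_image[OF bij])

lemma nbhd: assumes W: "open W" "0 \<in> W" shows "\<exists>m. Nn \<alpha> V m \<subseteq> W"
proof -
  define A where "A i = {y. apow \<alpha> (-i) y \<in> V}" for i
  have "range A = range (\<lambda>k. apow \<alpha> k ` V)" unfolding A_def A_eq by simp
  then have IF: "\<Inter>(range A) = {0}" using Vi by simp
  have cS: "compact (- W)" using compact_Int_closed[OF cpt closed_Compl[OF W(1)]] by simp
  have cl: "\<And>T. T \<in> range A \<Longrightarrow> closed T" using A_closed unfolding A_def by blast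
  have e: "- W \<inter> \<Inter>(range A) = {}" using IF W(2) by blast
  have "\<not> (\<forall>F'. finite F' \<longrightarrow> F' \<subseteq> range A \<longrightarrow> - W \<inter> \<Inter>F' \<noteq> {})"
  proof
    assume H: "\<forall>F'. finite F' \<longrightarrow> F' \<subseteq> range A \<longrightarrow> - W \<inter> \<Inter>F' \<noteq> {}"
    have "- W \<inter> \<Inter>(range A) \<noteq> {}" using compact_imp_fip[OF cS cl] H by auto
    then show False using e by simp
  qed
  then obtain F' where F': "finite F'" "F' \<subseteq> range A" "- W \<inter> \<Inter>F' = {}" by blast
  obtain I where I: "finite I" "F' = A ` I" using finite_subset_image[OF F'(1) F'(2)] by blast
  define m where "m = (\<Sum>i\<in>I. nat \<bar>i\<bar>)"
  have "Nn \<alpha> V m \<subseteq> W"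
  proof
    fix y assume y: "y \<in> Nn \<alpha> V m"
    have "y \<in> A i" if iI: "i \<in> I" for i
    proof -
      have "nat \<bar>i\<bar> \<le> m" unfolding m_def by (rule member_le_sum[OF iI _ I(1)]) simp
      then have "i \<in> {- int m..int m}" by auto
      then show ?thesis using y unfolding Nn_def A_def by blast
    qed
    then have "y \<in> \<Inter>F'" using I(2) by blast
    then show "y \<in> W" using F'(3) by blast
  qed
  then show ?thesis by blast
qed

lemma P_N: "Pp \<alpha> V (- int m) \<subseteq> Nn \<alpha> V m" unfolding Pp_def Nn_def by auto
lemma M_N: "Mm \<alpha> V (int m) \<subseteq> Nn \<alpha> V m" unfolding Mm_def Nn_def by auto

lemma alg: fixes a b g d :: "'a"
  assumes "g = a + b" shows "- g + (- d + a) = (- g + - d - - g) + - b"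
proof -
  have "a = g + - b" using assms by (simp add: add.assoc)
  then show ?thesis by (simp add: add.assoc diff_conv_add_uminus del: add_uminus_conv_diff)
qed

lemma part2: "closure (\<Union>n::nat. Pp \<alpha> V (int n) \<inter> Mm \<alpha> V (- int n)) = UNIV"
proof -
  let ?D = "\<Union>n::nat. Pp \<alpha> V (int n) \<inter> Mm \<alpha> V (- int n)"
  obtain k :: nat where k0: "\<forall>t. setprod (Pp \<alpha> V (int k + t)) (Mm \<alpha> V t) = UNIV" using decomp by blast
  have k: "setprod (Pp \<alpha> V (int k + t)) (Mm \<alpha> V t) = UNIV" for t using k0 by blast
  have "g \<in> closure ?D" for g
  proof (rule ccontr)
    assume g: "g \<notin> closure ?D"
    define W where "W = - closure ?D"
    have oO: "open W" unfolding W_def by (simp add: open_Compl)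
    have "open {y. g + y \<in> W}" by (rule translate_open[OF tg oO])
    moreover have "0 \<in> {y. g + y \<in> W}" using g unfolding W_def by simp
    ultimately obtain m where m: "Nn \<alpha> V m \<subseteq> {y. g + y \<in> W}" using nbhd by presburger
    have "g \<in> setprod (Pp \<alpha> V (int k + int m)) (Mm \<alpha> V (int m))" using k[of "int m"] by (simp only: UNIV_I)
    then obtain a b where ab: "g = a + b" "a \<in> Pp \<alpha> V (int k + int m)" "b \<in> Mm \<alpha> V (int m)"
      by (rule setprodE)
    have "a \<in> setprod (Pp \<alpha> V (int k + (- int m - int k))) (Mm \<alpha> V (- int m - int k))" using k[of "- int m - int k"] by (simp only: UNIV_I)
    then obtain d c where dc: "a = d + c" "d \<in> Pp \<alpha> V (int k + (- int m - int k))" "c \<in> Mm \<alpha> V (- int m - int k)"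
      by (rule setprodE)
    have d: "d \<in> Pp \<alpha> V (- int m)" using dc(2) by simp
    have c_eq: "c = - d + a" using dc(1) by (simp add: add.assoc[symmetric])
    have Psg: "\<forall>x\<in>Pp \<alpha> V (int k + int m). \<forall>y\<in>Pp \<alpha> V (int k + int m). x + y \<in> Pp \<alpha> V (int k + int m)"
         "\<forall>x\<in>Pp \<alpha> V (int k + int m). - x \<in> Pp \<alpha> V (int k + int m)"
      using P_normal[of "int k + int m"] by (simp_all add: is_normal_subgroup_def is_subgroup_def)
    have "d \<in> Pp \<alpha> V (int k + int m)" using d P_mono[of "- int m" "int k + int m"] by auto
    then have "- d + a \<in> Pp \<alpha> V (int k + int m)" using Psg(1) Psg(2) ab(2) by (meson bspec)
    then have cP: "c \<in> Pp \<alpha> V (int (k + m))" using c_eq by simp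
    have e: "- int m - int k = - int (k + m)" by simp
    have cM: "c \<in> Mm \<alpha> V (- int (k + m))" using dc(3) e by (simp only:)
    have cD: "c \<in> ?D" using cP cM by blast
    have Nsg: "\<forall>x\<in>Nn \<alpha> V m. \<forall>y\<in>Nn \<alpha> V m. x + y \<in> Nn \<alpha> V m"
         "\<forall>x\<in>Nn \<alpha> V m. - x \<in> Nn \<alpha> V m"
         "\<forall>g x. x \<in> Nn \<alpha> V m \<longrightarrow> g + x - g \<in> Nn \<alpha> V m"
      using N_normal[of m] by (simp_all add: is_normal_subgroup_def is_subgroup_def)
    have dN: "d \<in> Nn \<alpha> V m" using d P_N by blast
    have bN: "b \<in> Nn \<alpha> V m" using ab(3) M_N by blast
    have "- d \<in> Nn \<alpha> V m" using dN Nsg(2) by (rule bspec[rotated])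
    then have "- g + - d - - g \<in> Nn \<alpha> V m" using Nsg(3) by (simp only:)
    moreover have "- b \<in> Nn \<alpha> V m" using bN Nsg(2) by (rule bspec[rotated])
    ultimately have "(- g + - d - - g) + - b \<in> Nn \<alpha> V m" using Nsg(1) by (meson bspec)
    then have "- g + (- d + a) \<in> Nn \<alpha> V m" using alg[OF ab(1)] by simp
    then have "- g + c \<in> Nn \<alpha> V m" using c_eq by simp
    then have "g + (- g + c) \<in> W" using m by blast
    then have "c \<in> W" by (simp add: add.assoc[symmetric])
    moreover have "c \<in> closure ?D" by (rule subsetD[OF closure_subset cD])
    ultimately show False unfolding W_def by (simp only: Compl_iff not_True_eq_False)
  qed
  then show ?thesis by (intro sym[OF UNIV_eq_I])
qed

end


lemma Vplus_eq: assumes "bij \<alpha>" shows "Vplus \<alpha> V = Pp \<alpha> V 0"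
proof (rule set_eqI)
  fix x
  have "x \<in> Vplus \<alpha> V \<longleftrightarrow> (\<forall>k::nat. apow \<alpha> (- int k) x \<in> V)"
    unfolding Vplus_def using apow_mem_image[OF assms, of x "int _" V] by (simp del: apow_neg_int)
  also have "\<dots> \<longleftrightarrow> (\<forall>i\<ge>0. apow \<alpha> (- i) x \<in> V)"
  proof
    assume H: "\<forall>k::nat. apow \<alpha> (- int k) x \<in> V"
    show "\<forall>i\<ge>0. apow \<alpha> (- i) x \<in> V"
    proof (intro allI impI)
      fix i :: int assume "0 \<le> i"
      then have "i = int (nat i)" by simp
      then show "apow \<alpha> (- i) x \<in> V" using H by metis
    qed
  next
    assume H: "\<forall>i\<ge>0. apow \<alpha> (- i) x \<in> V"
    show "\<forall>k::nat. apow \<alpha> (- int k) x \<in> V"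
    proof
      fix k :: nat
      have "0 \<le> int k" by simp
      then show "apow \<alpha> (- int k) x \<in> V" using H by blast
    qed
  qed
  also have "\<dots> \<longleftrightarrow> x \<in> Pp \<alpha> V 0" by (auto simp: Pp_def)
  finally show "x \<in> Vplus \<alpha> V \<longleftrightarrow> x \<in> Pp \<alpha> V 0" .
qed

lemma Vminus_eq: assumes "bij \<alpha>" shows "Vminus \<alpha> V = Mm \<alpha> V 0"
proof (rule set_eqI)
  fix x
  have "x \<in> Vminus \<alpha> V \<longleftrightarrow> (\<forall>k::nat. apow \<alpha> (- (- int k)) x \<in> V)"
    unfolding Vminus_def using apow_mem_image[OF assms, of x "- int _" V] by (simp del: apow_int)
  also have "\<dots> \<longleftrightarrow> (\<forall>i\<le>0. apow \<alpha> (- i) x \<in> V)"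
  proof
    assume H: "\<forall>k::nat. apow \<alpha> (- (- int k)) x \<in> V"
    show "\<forall>i\<le>0. apow \<alpha> (- i) x \<in> V"
    proof (intro allI impI)
      fix i :: int assume "i \<le> 0"
      then have "i = - int (nat (- i))" by simp
      then show "apow \<alpha> (- i) x \<in> V" using H by metis
    qed
  next
    assume H: "\<forall>i\<le>0. apow \<alpha> (- i) x \<in> V"
    show "\<forall>k::nat. apow \<alpha> (- (- int k)) x \<in> V"
    proof
      fix k :: nat
      have "- int k \<le> 0" by simp
      then show "apow \<alpha> (- (- int k)) x \<in> V" using H by blast
    qed
  qed
  also have "\<dots> \<longleftrightarrow> x \<in> Mm \<alpha> V 0" by (auto simp: Mm_def)
  finally show "x \<in> Vminus \<alpha> V \<longleftrightarrow> x \<in> Mm \<alpha> V 0" .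
qed

theorem proposition5p8:
  fixes \<alpha> :: "'a::{group_add,t2_space} \<Rightarrow> 'a" and V :: "'a set"
  assumes "topological_group TYPE('a)"
    and "compact (UNIV :: 'a set)"
    and "top_automorphism \<alpha>"
    and "top_transitive \<alpha>"
    and "finite_depth \<alpha>"
    and "open V" and "is_normal_subgroup V"
    and "(\<Inter>k. apow \<alpha> k ` V) = {0}"
    and "V = setprod (Vplus \<alpha> V) (Vminus \<alpha> V)"
  shows "(\<exists>k::nat. setprod ((\<alpha> ^^ k) ` Vplus \<alpha> V) (Vminus \<alpha> V) = UNIV)
       \<and> closure (\<Union>n::nat. (\<alpha> ^^ n) ` Vplus \<alpha> V \<inter> (inv \<alpha> ^^ n) ` Vminus \<alpha> V) = UNIV"
proof -
  have bij: "bij \<alpha>" using assms(3) by (simp add: top_automorphism_def)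
  have VP: "Vplus \<alpha> V = Pp \<alpha> V 0" by (rule Vplus_eq[OF bij])
  have VM: "Vminus \<alpha> V = Mm \<alpha> V 0" by (rule Vminus_eq[OF bij])
  have Vp: "V = setprod (Pp \<alpha> V 0) (Mm \<alpha> V 0)" using assms(9) VP VM by simp
  interpret setting \<alpha> V
    by (rule setting.intro[OF assms(1,2,3,4,6,7,8) Vp])
  have e1: "(\<alpha> ^^ k) ` Vplus \<alpha> V = Pp \<alpha> V (int k)" for k
    using P_shift[of "int k" 0] VP by simp
  have e2: "(inv \<alpha> ^^ n) ` Vminus \<alpha> V = Mm \<alpha> V (- int n)" for n
    using M_shift[of "- int n" 0] VM by simp
  have "(\<exists>k::nat. setprod ((\<alpha> ^^ k) ` Vplus \<alpha> V) (Vminus \<alpha> V) = UNIV)"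
    using part1 e1 VM by simp
  moreover have "closure (\<Union>n::nat. (\<alpha> ^^ n) ` Vplus \<alpha> V \<inter> (inv \<alpha> ^^ n) ` Vminus \<alpha> V) = UNIV"
    using part2 e1 e2 by simp
  ultimately show ?thesis by (rule conjI)
qed

end
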